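(* Let $N\ge1$ and $M\le N$ be positive integers of the same parity. Write $N=2\rho$ or $N=2\rho+1$, and set $p=0$ if $N$ is even and $p=-\tfrac12$ if $N$ is odd. Let $$B_N(z)=2^{-(N-1)}z^{-\lceil N/2\rceil}(z+1)^N.$$ Let $c_M$ be the odd-symmetric Laurent polynomial ($c_M(z)=c_M(z^{-1})$), with coefficients supported in $[-\lceil M/2\rceil+1,\lceil M/2\rceil-1]$, such that $$\sum_{i=0}^s\binom{s}{i}\frac{d^ic_M}{dz^i}(1)\frac{d^{s-i}B_N}{dz^{s-i}}(1)=2\prod_{i=0}^{s-1}(p-i),\qquad s=0,\dots,M-1.$$ Define $\delta(z):=-\frac{(1-z)^2}{4z}$ and $\sigma(z):=\frac{(1+z)^2}{4z}$. Then $a_{M,N}(z):=B_N(z)c_M(z)$ equals $$a_{M,N}(z)=2\,\sigma^\rho(z)\sum_{s=0}^{\lfloor (M-1)/2\rfloor}\binom{\rho+s-1}{s}\delta^s(z)\quad\text{if } N=2\rho,$$ $$a_{M,N}(z)=\frac{z+1}{z}\,\sigma^\rho(z)\sum_{s=0}^{\lfloor (M-1)/2\rfloor}\binom{\rho-\frac12+s}{s}\delta^s(z)\quad\text{if } N=2\rho+1.$$ This is the symbol of the (primal/dual) polynomial pseudo-spline.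
   Context: $\lceil L\rceil:=\min\{m\in\mathbb{Z}:m\ge L\}$ and $\lfloor L\rfloor:=\max\{m\in\mathbb{Z}:m\le L\}$. Generalized binomial coefficients are $\binom{x}{s}=x(x-1)\cdots(x-s+1)/s!$. An empty product equals $1$. *)

theory Defs
  imports "HOL-Analysis.Analysis"
begin

definition BN :: "nat \<Rightarrow> real \<Rightarrow> real" where
  "BN N z = (1/2) ^ (N - 1) * z powi (- int ((N + 1) div 2)) * (z + 1) ^ N"

definition laurent :: "(int \<Rightarrow> real) \<Rightarrow> int \<Rightarrow> int \<Rightarrow> real \<Rightarrow> real" where
  "laurent c lo hi z = (\<Sum>j\<in>{lo..hi}. c j * z powi j)"

definition delta_sym :: "real \<Rightarrow> real" where
  "delta_sym z = - ((1 - z)^2 / (4 * z))"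

definition sigma_sym :: "real \<Rightarrow> real" where
  "sigma_sym z = (1 + z)^2 / (4 * z)"

end

theory Submission
  imports Defs "HOL-Computational_Algebra.Polynomial" "HOL-Computational_Algebra.Formal_Power_Series"
begin


definition sm :: "real set \<Rightarrow> (real \<Rightarrow> real) \<Rightarrow> bool" where
  "sm S f \<longleftrightarrow> (\<forall>n. \<forall>x\<in>S. (deriv^^n) f field_differentiable (at x))"

lemma hd_cong:
  assumes "open S" "\<And>x. x \<in> S \<Longrightarrow> f x = g x" "x \<in> S"
  shows "(deriv^^n) f x = (deriv^^n) g x"
  using assms(3)
proof (induction n arbitrary: x)
  case 0 then show ?case using assms by simp
next
  case (Suc n)
  have "eventually (\<lambda>y. (deriv^^n) f y = (deriv^^n) g y) (nhds x)"
    using eventually_nhds_in_open[OF assms(1) Suc.prems] by (rule eventually_mono) (use Suc.IH in auto)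
  then show ?case by (simp add: deriv_cong_ev)
qed

lemma hd_formula:
  assumes "open S" "\<And>x. x\<in>S \<Longrightarrow> F 0 x = f x"
    "\<And>n x. x\<in>S \<Longrightarrow> (F n has_field_derivative F (Suc n) x) (at x)"
  shows hd_formula_eq: "x\<in>S \<Longrightarrow> (deriv^^n) f x = F n x" and hd_formula_sm: "sm S f"
proof -
  have eq: "x\<in>S \<Longrightarrow> (deriv^^n) f x = F n x" for n x
  proof (induction n arbitrary: x)
    case 0 then show ?case using assms by simp
  next
    case (Suc n)
    have "eventually (\<lambda>y. (deriv^^n) f y = F n y) (nhds x)"
      using eventually_nhds_in_open[OF assms(1) Suc.prems] by (rule eventually_mono) (use Suc.IH in auto)
    then have "deriv ((deriv^^n) f) x = deriv (F n) x" by (simp add: deriv_cong_ev)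
    also have "\<dots> = F (Suc n) x" using assms(3)[OF Suc.prems] by (rule DERIV_imp_deriv)
    finally show ?case by simp
  qed
  then show "x\<in>S \<Longrightarrow> (deriv^^n) f x = F n x" .
  show "sm S f" unfolding sm_def
  proof (intro allI ballI)
    fix n x assume x: "x \<in> S"
    have "((deriv^^n) f has_field_derivative F (Suc n) x) (at x)"
      by (rule has_field_derivative_transform_within_open[OF assms(3)[OF x] assms(1) x]) (use eq in auto)
    then show "(deriv^^n) f field_differentiable (at x)" unfolding field_differentiable_def by blast
  qed
qed

lemma sm_D: "sm S f \<Longrightarrow> x \<in> S \<Longrightarrow> ((deriv^^n) f has_field_derivative (deriv^^(Suc n)) f x) (at x)"
  unfolding sm_def by (simp add: DERIV_deriv_iff_field_differentiable)

lemma sm_cong: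
  assumes "sm S f" "open S" "\<And>x. x \<in> S \<Longrightarrow> f x = g x"
  shows "sm S g"
proof (rule hd_formula_sm[OF assms(2), where F="\<lambda>n. (deriv^^n) f"])
  show "x \<in> S \<Longrightarrow> (deriv^^0) f x = g x" for x using assms by simp
  show "x \<in> S \<Longrightarrow> ((deriv^^n) f has_field_derivative (deriv^^(Suc n)) f x) (at x)" for n x
    using sm_D[OF assms(1)] by blast
qed

lemma sm_mono: "sm T f \<Longrightarrow> S \<subseteq> T \<Longrightarrow> sm S f"
  unfolding sm_def by blast

lemma Suc_choose': "Suc n choose k = (n choose k) + (if k = 0 then 0 else (n choose (k-1)))"
  by (cases k) simp_all

lemma leibniz:
  fixes f g :: "real \<Rightarrow> real"
  assumes "sm S f" "sm S g" "open S" and z: "z \<in> S"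
  shows "(deriv ^^ n) (\<lambda>w. f w * g w) z =
           (\<Sum>i = 0..n. of_nat (n choose i) * (deriv ^^ i) f z * (deriv ^^ (n-i)) g z)"
using z
proof (induction n arbitrary: z)
  case 0 then show ?case by simp
next
  case (Suc n z)
  have *: "\<And>n. ((deriv ^^ n) f has_field_derivative deriv ((deriv ^^ n) f) z) (at z)"
          "\<And>n. ((deriv ^^ n) g has_field_derivative deriv ((deriv ^^ n) g) z) (at z)"
    using Suc.prems assms sm_D by auto
  have sumeq: "(\<Sum>i = 0..n.
               of_nat (n choose i) * (deriv ((deriv ^^ i) f) z * (deriv ^^ (n-i)) g z + deriv ((deriv ^^ (n-i)) g) z * (deriv ^^ i) f z)) =
            g z * deriv ((deriv ^^ n) f) z + (\<Sum>i = 0..n. (deriv ^^ i) f z * (of_nat (Suc n choose i) * (deriv ^^ (Suc n - i)) g z))"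
    apply (simp add: Suc_choose' algebra_simps sum.distrib)
    apply (subst (4) sum_Suc_reindex)
    apply (auto simp: algebra_simps Suc_diff_le intro: sum.cong)
    done
  have "((deriv ^^ n) (\<lambda>w. f w * g w) has_field_derivative
         (\<Sum>i = 0..Suc n. (Suc n choose i) * (deriv ^^ i) f z * (deriv ^^ (Suc n - i)) g z))
        (at z)"
    apply (rule has_field_derivative_transform_within_open
        [of "\<lambda>w. (\<Sum>i = 0..n. of_nat (n choose i) * (deriv ^^ i) f w * (deriv ^^ (n-i)) g w)" _ _ S])
       apply (simp add: algebra_simps)
       apply (rule derivative_eq_intros | simp)+
           apply (auto intro: DERIV_mult * \<open>open S\<close> Suc.prems Suc.IH [symmetric])
    by (metis (no_types, lifting) mult.commute sum.cong sumeq)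
  then show ?case
    unfolding funpow.simps o_apply
    by (simp add: DERIV_imp_deriv)
qed

lemma sm_hd_add:
  assumes "sm S f" "sm S g" "open S"
  shows "sm S (\<lambda>w. f w + g w)" "x \<in> S \<Longrightarrow> (deriv^^n) (\<lambda>w. f w + g w) x = (deriv^^n) f x + (deriv^^n) g x"
proof -
  have F: "x \<in> S \<Longrightarrow> ((\<lambda>w. (deriv^^n) f w + (deriv^^n) g w) has_field_derivative
     (\<lambda>w. (deriv^^(Suc n)) f w + (deriv^^(Suc n)) g w) x) (at x)" for n x
    using sm_D[OF assms(1)] sm_D[OF assms(2)] by (auto intro!: derivative_eq_intros)
  show "sm S (\<lambda>w. f w + g w)" by (rule hd_formula_sm[where F="\<lambda>n w. (deriv^^n) f w + (deriv^^n) g w", OF assms(3) _ F]) auto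
  show "x \<in> S \<Longrightarrow> (deriv^^n) (\<lambda>w. f w + g w) x = (deriv^^n) f x + (deriv^^n) g x"
    by (rule hd_formula_eq[where F="\<lambda>n w. (deriv^^n) f w + (deriv^^n) g w", OF assms(3) _ F]) auto
qed

lemma sm_hd_diff:
  assumes "sm S f" "sm S g" "open S"
  shows "sm S (\<lambda>w. f w - g w)" "x \<in> S \<Longrightarrow> (deriv^^n) (\<lambda>w. f w - g w) x = (deriv^^n) f x - (deriv^^n) g x"
proof -
  have F: "x \<in> S \<Longrightarrow> ((\<lambda>w. (deriv^^n) f w - (deriv^^n) g w) has_field_derivative
     (\<lambda>w. (deriv^^(Suc n)) f w - (deriv^^(Suc n)) g w) x) (at x)" for n x
    using sm_D[OF assms(1)] sm_D[OF assms(2)] by (auto intro!: derivative_eq_intros)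
  show "sm S (\<lambda>w. f w - g w)" by (rule hd_formula_sm[where F="\<lambda>n w. (deriv^^n) f w - (deriv^^n) g w", OF assms(3) _ F]) auto
  show "x \<in> S \<Longrightarrow> (deriv^^n) (\<lambda>w. f w - g w) x = (deriv^^n) f x - (deriv^^n) g x"
    by (rule hd_formula_eq[where F="\<lambda>n w. (deriv^^n) f w - (deriv^^n) g w", OF assms(3) _ F]) auto
qed

lemma sm_hd_sum:
  assumes "\<And>i. i \<in> I \<Longrightarrow> sm S (f i)" "open S"
  shows "sm S (\<lambda>w. \<Sum>i\<in>I. f i w)" "x \<in> S \<Longrightarrow> (deriv^^n) (\<lambda>w. \<Sum>i\<in>I. f i w) x = (\<Sum>i\<in>I. (deriv^^n) (f i) x)"
proof -
  have F: "x \<in> S \<Longrightarrow> ((\<lambda>w. \<Sum>i\<in>I. (deriv^^n) (f i) w) has_field_derivative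
     (\<lambda>w. \<Sum>i\<in>I. (deriv^^(Suc n)) (f i) w) x) (at x)" for n x
    using sm_D[OF assms(1)] by (auto intro!: derivative_eq_intros)
  show "sm S (\<lambda>w. \<Sum>i\<in>I. f i w)" by (rule hd_formula_sm[where F="\<lambda>n w. \<Sum>i\<in>I. (deriv^^n) (f i) w", OF assms(2) _ F]) auto
  show "x \<in> S \<Longrightarrow> (deriv^^n) (\<lambda>w. \<Sum>i\<in>I. f i w) x = (\<Sum>i\<in>I. (deriv^^n) (f i) x)"
    by (rule hd_formula_eq[where F="\<lambda>n w. \<Sum>i\<in>I. (deriv^^n) (f i) w", OF assms(2) _ F]) auto
qed

lemma sm_hd_cmult:
  assumes "sm S f" "open S"
  shows "sm S (\<lambda>w. c * f w)" "x \<in> S \<Longrightarrow> (deriv^^n) (\<lambda>w. c * f w) x = c * (deriv^^n) f x"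
proof -
  have F: "x \<in> S \<Longrightarrow> ((\<lambda>w. c * (deriv^^n) f w) has_field_derivative
     (\<lambda>w. c * (deriv^^(Suc n)) f w) x) (at x)" for n x
    using sm_D[OF assms(1)] by (auto intro!: derivative_eq_intros)
  show "sm S (\<lambda>w. c * f w)" by (rule hd_formula_sm[where F="\<lambda>n w. c * (deriv^^n) f w", OF assms(2) _ F]) auto
  show "x \<in> S \<Longrightarrow> (deriv^^n) (\<lambda>w. c * f w) x = c * (deriv^^n) f x"
    by (rule hd_formula_eq[where F="\<lambda>n w. c * (deriv^^n) f w", OF assms(2) _ F]) auto
qed

lemma sm_hd_const:
  fixes x c :: real
  shows "sm S (\<lambda>w. c)" "(deriv^^n) (\<lambda>w. c) x = (if n = 0 then c else 0)"
proof -
  have F: "((\<lambda>w. if n = 0 then c else 0) has_field_derivative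
     (\<lambda>w. if Suc n = 0 then c else 0) x) (at x)" for n x
    by (auto intro!: derivative_eq_intros)
  show "sm S (\<lambda>w. c)" by (rule hd_formula_sm[where F="\<lambda>n w. if n = 0 then c else 0", OF open_UNIV _ F, THEN sm_mono]) auto
  show "(deriv^^n) (\<lambda>w. c) x = (if n = 0 then c else 0)"
    by (rule hd_formula_eq[where F="\<lambda>n w. if n = 0 then c else 0", OF open_UNIV _ F]) auto
qed

lemma sm_hd_id:
  fixes x :: real
  shows "sm S (\<lambda>w. w)" "(deriv^^n) (\<lambda>w. w) x = (if n = 0 then x else if n = 1 then 1 else 0)"
proof -
  have F: "((\<lambda>w. if n = 0 then w else if n = 1 then 1 else 0) has_field_derivative
     (\<lambda>w. if Suc n = 0 then w else if Suc n = 1 then 1 else 0) x) (at x)" for n x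
    by (auto intro!: derivative_eq_intros)
  show "sm S (\<lambda>w. w)" by (rule hd_formula_sm[where F="\<lambda>n w. if n = 0 then w else if n = 1 then 1 else 0", OF open_UNIV _ F, THEN sm_mono]) auto
  show "(deriv^^n) (\<lambda>w. w) x = (if n = 0 then x else if n = 1 then 1 else 0)"
    using hd_formula_eq[where F="\<lambda>n w. if n = 0 then w else if n = 1 then 1 else 0" and f="\<lambda>w. w", OF open_UNIV _ F, of x n] by simp
qed

lemma sm_hd_powr:
  assumes "S \<subseteq> {0<..}"
  shows "sm S (\<lambda>w. w powr a)" "x > 0 \<Longrightarrow> (deriv^^n) (\<lambda>w. w powr a) x = (\<Prod>i<n. a - real i) * x powr (a - real n)"
proof -
  have F: "x \<in> {0<..} \<Longrightarrow> ((\<lambda>w. (\<Prod>i<n. a - real i) * w powr (a - real n)) has_field_derivative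
     (\<lambda>w. (\<Prod>i<Suc n. a - real i) * w powr (a - real (Suc n))) x) (at x)" for n x
    by (auto intro!: derivative_eq_intros simp: powr_diff powr_add field_simps)
  show "sm S (\<lambda>w. w powr a)" by (rule hd_formula_sm[where F="\<lambda>n w. (\<Prod>i<n. a - real i) * w powr (a - real n)", OF open_greaterThan _ F, THEN sm_mono]) (use assms in auto)
  show "x > 0 \<Longrightarrow> (deriv^^n) (\<lambda>w. w powr a) x = (\<Prod>i<n. a - real i) * x powr (a - real n)"
    by (rule hd_formula_eq[where F="\<lambda>n w. (\<Prod>i<n. a - real i) * w powr (a - real n)", OF open_greaterThan _ F]) auto
qed

lemma sm_mult:
  assumes "sm S f" "sm S g" "open S"
  shows "sm S (\<lambda>w. f w * g w)"
  unfolding sm_def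
proof (intro allI ballI)
  fix n x assume x: "x \<in> S"
  have "((\<lambda>w. \<Sum>i = 0..n. of_nat (n choose i) * (deriv ^^ i) f w * (deriv ^^ (n-i)) g w)
     has_field_derivative (\<Sum>i = 0..n. of_nat (n choose i) * ((deriv ^^ Suc i) f x * (deriv ^^ (n-i)) g x
          + (deriv ^^ i) f x * (deriv ^^ Suc (n-i)) g x))) (at x)"
    using sm_D[OF assms(1) x] sm_D[OF assms(2) x]
    by (auto intro!: derivative_eq_intros simp: algebra_simps)
  then have "((deriv ^^ n) (\<lambda>w. f w * g w) has_field_derivative (\<Sum>i = 0..n. of_nat (n choose i) * ((deriv ^^ Suc i) f x * (deriv ^^ (n-i)) g x
          + (deriv ^^ i) f x * (deriv ^^ Suc (n-i)) g x))) (at x)"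
    by (rule has_field_derivative_transform_within_open[OF _ assms(3) x])
       (simp add: leibniz[OF assms])
  then show "(deriv ^^ n) (\<lambda>w. f w * g w) field_differentiable at x"
    unfolding field_differentiable_def by blast
qed

lemma sm_power:
  assumes "sm S f" "open S"
  shows "sm S (\<lambda>w. f w ^ m)"
proof (induction m)
  case 0 then show ?case by (simp add: sm_hd_const)
next
  case (Suc m) then show ?case using sm_mult[OF assms(1) Suc assms(2)] by simp
qed

definition vanish :: "nat \<Rightarrow> (real \<Rightarrow> real) \<Rightarrow> bool" where
  "vanish M F \<longleftrightarrow> (\<forall>s<M. (deriv^^s) F 1 = 0)"

lemma van_mult:
  assumes "sm S f" "sm S F" "open S" "1 \<in> S" "vanish M F"
  shows "vanish M (\<lambda>w. f w * F w)"
  unfolding vanish_def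
proof (intro allI impI)
  fix s assume s: "s < M"
  have "(deriv^^s) (\<lambda>w. f w * F w) 1 = (\<Sum>i = 0..s. of_nat (s choose i) * (deriv ^^ i) f 1 * (deriv ^^ (s-i)) F 1)"
    by (rule leibniz[OF assms(1-4)])
  also have "\<dots> = 0"
    by (rule sum.neutral) (use assms(5) s in \<open>auto simp: vanish_def\<close>)
  finally show "(deriv^^s) (\<lambda>w. f w * F w) 1 = 0" .
qed

lemma van_cancel:
  assumes "sm S g" "sm S H" "open S" "1 \<in> S" "g 1 \<noteq> 0" "vanish M (\<lambda>w. g w * H w)"
  shows "vanish M H"
  unfolding vanish_def
proof (intro allI impI)
  fix s assume "s < M"
  then show "(deriv^^s) H 1 = 0"
  proof (induction s rule: less_induct)
    case (less s)
    have "0 = (deriv^^s) (\<lambda>w. g w * H w) 1" using assms(6) less.prems by (simp add: vanish_def)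
    also have "\<dots> = (\<Sum>i = 0..s. of_nat (s choose i) * (deriv ^^ i) g 1 * (deriv ^^ (s-i)) H 1)"
      by (rule leibniz[OF assms(1-4)])
    also have "\<dots> = g 1 * (deriv ^^ s) H 1 + (\<Sum>i = Suc 0..s. of_nat (s choose i) * (deriv ^^ i) g 1 * (deriv ^^ (s-i)) H 1)"
      by (subst sum.atLeast_Suc_atMost) auto
    also have "(\<Sum>i = Suc 0..s. of_nat (s choose i) * (deriv ^^ i) g 1 * (deriv ^^ (s-i)) H 1) = 0"
      by (rule sum.neutral) (use less in auto)
    finally show ?case using assms(5) by simp
  qed
qed

lemma sm_shift: "sm S (\<lambda>w. w - c)"
  using sm_hd_diff(1)[OF sm_hd_id(1) sm_hd_const(1) open_UNIV, THEN sm_mono] by blast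

lemma hd_shift: fixes x c :: real shows "(deriv^^n) (\<lambda>w. w - c) x = (if n = 0 then x - c else if n = 1 then 1 else 0)"
  using sm_hd_diff(2)[OF sm_hd_id(1) sm_hd_const(1) open_UNIV, of x n c] by (simp add: sm_hd_id sm_hd_const)

lemma van_shift:
  assumes "sm S h" "open S" "1 \<in> S"
  shows "vanish m (\<lambda>w. (w - 1)^m * h w)"
proof (induction m)
  case 0 then show ?case by (simp add: vanish_def)
next
  case (Suc m)
  have smG: "sm S (\<lambda>w. (w - 1)^m * h w)"
    by (rule sm_mult[OF sm_power[OF sm_shift assms(2)] assms(1,2)])
  have eq: "(\<lambda>w. (w - 1)^Suc m * h w) = (\<lambda>w. (w - 1) * ((w - 1)^m * h w))" by (simp add: algebra_simps)
  show ?case unfolding vanish_def eq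
  proof (intro allI impI)
    fix s assume s: "s < Suc m"
    have "(deriv^^s) (\<lambda>w. (w - 1) * ((w - 1)^m * h w)) 1 =
      (\<Sum>i = 0..s. of_nat (s choose i) * (deriv ^^ i) (\<lambda>w. w - 1) 1 * (deriv ^^ (s-i)) (\<lambda>w. (w - 1)^m * h w) 1)"
      by (rule leibniz[OF sm_shift smG assms(2,3)])
    also have "\<dots> = 0"
    proof (rule sum.neutral, intro ballI)
      fix i assume i: "i \<in> {0..s}"
      show "of_nat (s choose i) * (deriv ^^ i) (\<lambda>w. w - 1) 1 * (deriv ^^ (s-i)) (\<lambda>w. (w - 1)^m * h w) 1 = 0"
      proof (cases "i = 1")
        case True
        then have "s - i < m" using s i by auto
        then show ?thesis using Suc.IH by (simp add: vanish_def)
      qed (simp add: hd_shift)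
    qed
    finally show "(deriv^^s) (\<lambda>w. (w - 1) * ((w - 1)^m * h w)) 1 = 0" .
  qed
qed

lemma van_cong:
  assumes "open S" "1 \<in> S" "\<And>x. x \<in> S \<Longrightarrow> f x = g x" "vanish M f"
  shows "vanish M g"
  using assms hd_cong[OF assms(1,3,2)] by (simp add: vanish_def)

lemma van_diff:
  assumes "sm S f" "sm S g" "open S" "1 \<in> S" "vanish M f" "vanish M g"
  shows "vanish M (\<lambda>w. f w - g w)"
  using assms sm_hd_diff(2)[OF assms(1-3) assms(4)] by (simp add: vanish_def)

lemma hd_poly:
  fixes q :: "real poly"
  shows "sm S (poly q)" "(deriv^^n) (poly q) x = poly ((pderiv^^n) q) x"
proof -
  have F: "((\<lambda>w. poly ((pderiv^^n) q) w) has_field_derivative (\<lambda>w. poly ((pderiv^^Suc n) q) w) x) (at x)" for n x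
    by simp
  show "sm S (poly q)"
    by (rule hd_formula_sm[where F="\<lambda>n w. poly ((pderiv^^n) q) w", OF open_UNIV _ F, THEN sm_mono]) auto
  show "(deriv^^n) (poly q) x = poly ((pderiv^^n) q) x"
    using hd_formula_eq[where F="\<lambda>n w. poly ((pderiv^^n) q) w" and f="poly q", OF open_UNIV _ F, of x n] by simp
qed

lemma poly_zero_lemma:
  fixes q :: "real poly"
  shows "degree q < M \<Longrightarrow> (\<forall>s<M. poly ((pderiv^^s) q) 1 = 0) \<Longrightarrow> q = 0"
proof (induction M arbitrary: q)
  case 0 then show ?case by simp
next
  case (Suc M)
  have "degree q = 0"
  proof (rule ccontr)
    assume nz: "degree q \<noteq> 0"
    have "pderiv q = 0"
    proof (rule Suc.IH)
      show "degree (pderiv q) < M" using Suc.prems(1) nz by (simp add: degree_pderiv)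
      show "\<forall>s<M. poly ((pderiv ^^ s) (pderiv q)) 1 = 0"
      proof (intro allI impI)
        fix s assume "s < M"
        then have "poly ((pderiv ^^ Suc s) q) 1 = 0" using Suc.prems(2)[rule_format, of "Suc s"] by blast
        then show "poly ((pderiv ^^ s) (pderiv q)) 1 = 0"
          by (simp only: funpow_Suc_right o_apply)
      qed
    qed
    then show False using nz by (simp add: pderiv_eq_0_iff)
  qed
  then obtain c where "q = [:c:]" by (meson degree_eq_zeroE)
  moreover have "poly q 1 = 0" using Suc.prems(2)[rule_format, of 0] by simp
  ultimately show ?case by simp
qed



definition Sa :: "nat \<Rightarrow> real \<Rightarrow> real \<Rightarrow> real" where
  "Sa K a x = (\<Sum>s=0..K. ((a + real s - 1) gchoose s) * x^s)"

definition Ra :: "nat \<Rightarrow> nat \<Rightarrow> real \<Rightarrow> real" where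
  "Ra K m x = (\<Sum>t=1..m. ((real t + real K - 1) gchoose K) * (1-x)^(t-1))"

lemma Sa_Suc: "Sa (Suc K) a x = Sa K a x + ((a + real K) gchoose Suc K) * x^Suc K"
  by (simp add: Sa_def algebra_simps)

lemma rec1: "(1-x) * Sa K a x = Sa K (a-1) x - ((a + real K - 1) gchoose K) * x^Suc K"
proof (induction K)
  case 0 then show ?case by (simp add: Sa_def)
next
  case (Suc K)
  have pas: "(a + real K) gchoose Suc K = ((a + real K - 1) gchoose K) + ((a + real K - 1) gchoose Suc K)"
    using gbinomial_Suc_Suc[of "a + real K - 1" K] by simp
  have "(1-x) * Sa (Suc K) a x = (1-x) * Sa K a x + ((a + real K) gchoose Suc K) * (x^Suc K - x^Suc (Suc K))"
    by (simp add: Sa_Suc algebra_simps)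
  also have "\<dots> = Sa K (a-1) x + ((a + real K - 1) gchoose Suc K) * x^Suc K - ((a + real K) gchoose Suc K) * x^Suc (Suc K)"
    unfolding Suc pas by (simp add: algebra_simps)
  also have "\<dots> = Sa (Suc K) (a-1) x - ((a + real (Suc K) - 1) gchoose Suc K) * x^Suc (Suc K)"
    by (simp add: Sa_Suc algebra_simps)
  finally show ?case .
qed

lemma Sa0: "Sa K 0 x = 1"
proof (induction K)
  case 0 then show ?case by (simp add: Sa_def)
next
  case (Suc K)
  have "(real K gchoose Suc K) = 0"
    by (metis binomial_eq_0 binomial_gbinomial lessI of_nat_0)
  then show ?case by (simp add: Sa_Suc Suc)
qed

lemma recm: "(1-x)^m * Sa K (real m) x = 1 - x^Suc K * Ra K m x"
proof (induction m)
  case 0 then show ?case by (simp add: Sa0 Ra_def)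
next
  case (Suc m)
  have "(1-x)^Suc m * Sa K (real (Suc m)) x = (1-x)^m * ((1-x) * Sa K (real (Suc m)) x)" by simp
  also have "\<dots> = (1-x)^m * Sa K (real m) x - (1-x)^m * ((real m + real K) gchoose K) * x^Suc K"
  proof -
    have "(1-x) * Sa K (real (Suc m)) x = Sa K (real m) x - ((real m + real K) gchoose K) * x^Suc K"
      using rec1[of x K "real (Suc m)"] by (simp add: add.commute)
    then show ?thesis by (simp only: ) (simp add: algebra_simps)
  qed
  also have "\<dots> = 1 - x^Suc K * Ra K (Suc m) x"
  proof -
    have "Ra K (Suc m) x = Ra K m x + ((real m + real K) gchoose K) * (1-x)^m"
      by (simp add: Ra_def add.commute)
    then show ?thesis using Suc.IH by (simp add: algebra_simps)
  qed
  finally show ?case .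
qed

lemma gconv: "(\<Sum>i=0..n. ((a + real i - 1) gchoose i) * ((b + real (n-i) - 1) gchoose (n-i)))
   = ((a + b + real n - 1) gchoose n)"
proof -
  have neg: "((c + real j - 1) gchoose j) = (-1)^j * ((-c) gchoose j)" for c :: real and j
    by (simp add: gbinomial_minus)
  have "(\<Sum>i=0..n. ((a + real i - 1) gchoose i) * ((b + real (n-i) - 1) gchoose (n-i)))
      = (\<Sum>i=0..n. (-1)^n * (((-a) gchoose i) * ((-b) gchoose (n-i))))"
  proof (rule sum.cong)
    fix i assume "i \<in> {0..n}"
    then have "(-1::real)^i * (-1)^(n-i) = (-1)^n" by (simp add: power_add[symmetric])
    then show "((a + real i - 1) gchoose i) * ((b + real (n-i) - 1) gchoose (n-i)) = (-1)^n * (((-a) gchoose i) * ((-b) gchoose (n-i)))"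
      unfolding neg by (metis (no_types, lifting) mult.assoc mult.left_commute)
  qed simp
  also have "\<dots> = (-1)^n * ((-a + -b) gchoose n)"
    by (simp add: sum_distrib_left[symmetric] gbinomial_Vandermonde)
  also have "\<dots> = ((a + b + real n - 1) gchoose n)"
    by (simp add: neg[of "a+b" n])
  finally show ?thesis .
qed

definition pp :: "nat \<Rightarrow> real \<Rightarrow> real poly" where
  "pp K a = (\<Sum>s\<le>K. monom ((a + real s - 1) gchoose s) s)"

definition qq :: "nat \<Rightarrow> real \<Rightarrow> real poly" where
  "qq K a = pp K a * pp K a - pp K (2*a)"

definition Ta :: "nat \<Rightarrow> real \<Rightarrow> real \<Rightarrow> real" where
  "Ta K a x = (\<Sum>i=Suc K..2*K. coeff (qq K a) i * x^(i - Suc K))"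

lemma poly_pp: "poly (pp K a) x = Sa K a x"
  by (simp add: pp_def Sa_def poly_sum poly_monom atMost_atLeast0)

lemma coeff_pp: "coeff (pp K a) i = (if i \<le> K then (a + real i - 1) gchoose i else 0)"
  by (simp add: pp_def coeff_sum)

lemma degree_pp: "degree (pp K a) \<le> K"
  unfolding pp_def by (rule degree_sum_le) (auto intro: order.trans[OF degree_monom_le])

lemma coeff_qq: "n \<le> K \<Longrightarrow> coeff (qq K a) n = 0"
proof -
  assume n: "n \<le> K"
  have "coeff (pp K a * pp K a) n = (\<Sum>i\<le>n. ((a + real i - 1) gchoose i) * ((a + real (n-i) - 1) gchoose (n-i)))"
    unfolding coeff_mult
  proof (rule sum.cong)
    fix i assume "i \<in> {..n}"
    then have "i \<le> K" "n - i \<le> K" using n by auto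
    then show "coeff (pp K a) i * coeff (pp K a) (n - i) = ((a + real i - 1) gchoose i) * ((a + real (n-i) - 1) gchoose (n-i))"
      by (simp only: coeff_pp if_True)
  qed simp
  also have "\<dots> = ((a + a + real n - 1) gchoose n)"
    using gconv[of a a n] by (simp only: atMost_atLeast0)
  also have "\<dots> = coeff (pp K (2*a)) n"
    using n by (simp only: coeff_pp if_True mult_2)
  finally show ?thesis by (simp only: qq_def coeff_diff)
qed

lemma degree_qq: "degree (qq K a) \<le> 2*K"
proof -
  have "degree (pp K a * pp K a) \<le> 2*K"
    using degree_mult_le[of "pp K a" "pp K a"] degree_pp[of K a] by linarith
  moreover have "degree (pp K (2*a)) \<le> 2*K" using degree_pp[of K "2*a"] by linarith
  ultimately show ?thesis unfolding qq_def by (rule degree_diff_le)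
qed

lemma poly_altdef_le:
  fixes p :: "real poly"
  assumes "degree p \<le> D"
  shows "poly p x = (\<Sum>i\<le>D. coeff p i * x^i)"
  unfolding poly_altdef
  by (rule sum.mono_neutral_left) (use assms in \<open>auto simp: coeff_eq_0\<close>)

lemma Sq: "Sa K a x ^ 2 = Sa K (2*a) x + x^Suc K * Ta K a x"
proof -
  have "poly (qq K a) x = (\<Sum>i\<le>2*K. coeff (qq K a) i * x^i)"
    by (rule poly_altdef_le[OF degree_qq])
  also have "\<dots> = (\<Sum>i\<le>K. coeff (qq K a) i * x^i) + (\<Sum>i=Suc K..2*K. coeff (qq K a) i * x^i)"
  proof (cases "K = 0")
    case False
    then have "{..2*K} = {..K} \<union> {Suc K..2*K}" by auto
    then show ?thesis by (simp add: sum.union_disjoint)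
  qed simp
  also have "(\<Sum>i\<le>K. coeff (qq K a) i * x^i) = 0"
    by (rule sum.neutral) (simp add: coeff_qq)
  also have "(\<Sum>i=Suc K..2*K. coeff (qq K a) i * x^i) = x^Suc K * Ta K a x"
    unfolding Ta_def sum_distrib_left
  proof (rule sum.cong)
    fix i assume "i \<in> {Suc K..2*K}"
    then have "i = Suc K + (i - Suc K)" by simp
    then have "x^i = x^Suc K * x^(i - Suc K)" by (metis power_add)
    then show "coeff (qq K a) i * x^i = x^Suc K * (coeff (qq K a) i * x^(i - Suc K))" by simp
  qed simp
  finally have "poly (qq K a) x = x^Suc K * Ta K a x" by simp
  then show ?thesis
    by (simp add: qq_def poly_pp power2_eq_square)
qed



lemma powi_powr: "(x::real) > 0 \<Longrightarrow> x powi j = x powr (real_of_int j)"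
  by (simp add: powr_real_of_int power_int_def power_inverse)

lemma sm_polycomp:
  assumes "sm S f" "open S"
  shows "sm S (\<lambda>z. \<Sum>s\<in>I. cc s * f z ^ e s)"
  by (intro sm_hd_sum(1) sm_hd_cmult(1) sm_power assms)

lemma opS: "open ({0<..}::real set)" by simp

lemma sm_delta: "sm {0<..} delta_sym"
proof (rule sm_cong[OF _ opS])
  show "sm {0<..} (\<lambda>z. -(1/4) * ((z - 1)^2 * z powr (-1)))"
    by (intro sm_hd_cmult(1) sm_mult sm_power sm_shift sm_hd_powr(1) opS) auto
  show "x \<in> {0<..} \<Longrightarrow> -(1/4) * ((x - 1)^2 * x powr (-1)) = delta_sym x" for x
    by (auto simp: delta_sym_def powr_neg_one power2_commute)
qed

lemma sm_laurent: "sm {0<..} (laurent c lo hi)"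
proof (rule sm_cong[OF _ opS])
  show "sm {0<..} (\<lambda>z. \<Sum>j\<in>{lo..hi}. c j * z powr (real_of_int j))"
    by (intro sm_hd_sum(1) sm_hd_cmult(1) sm_hd_powr(1) opS) auto
  show "x \<in> {0<..} \<Longrightarrow> (\<Sum>j\<in>{lo..hi}. c j * x powr (real_of_int j)) = laurent c lo hi x" for x
    by (auto simp: laurent_def powi_powr)
qed

lemma sm_BN: "sm {0<..} (BN N)"
proof (rule sm_cong[OF _ opS])
  show "sm {0<..} (\<lambda>z. (1/2)^(N-1) * (z powr (- real ((N+1) div 2)) * (z - (-1))^N))"
    by (intro sm_hd_cmult(1) sm_mult sm_power sm_shift sm_hd_powr(1) opS) auto
  show "x \<in> {0<..} \<Longrightarrow> (1/2)^(N-1) * (x powr (- real ((N+1) div 2)) * (x - (-1))^N) = BN N x" for x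
    by (auto simp: BN_def powi_powr)
qed

lemma sm_Sa: "sm {0<..} (\<lambda>z. Sa K a (delta_sym z))"
  unfolding Sa_def by (rule sm_polycomp[OF sm_delta opS])

lemma sm_Ra: "sm {0<..} (\<lambda>z. Ra K m (delta_sym z))"
proof -
  have "sm {0<..} (\<lambda>z. 1 - delta_sym z)"
    by (intro sm_hd_diff(1) sm_hd_const(1) sm_delta opS)
  then show ?thesis unfolding Ra_def by (rule sm_polycomp[OF _ opS])
qed

lemma sm_Ta: "sm {0<..} (\<lambda>z. Ta K a (delta_sym z))"
  unfolding Ta_def by (rule sm_polycomp[OF sm_delta opS])

lemma sigma_delta: "z \<noteq> 0 \<Longrightarrow> sigma_sym z = 1 - delta_sym z"
  by (simp add: sigma_sym_def delta_sym_def field_simps power2_eq_square)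

lemma BN_even: "z \<noteq> 0 \<Longrightarrow> r \<ge> 1 \<Longrightarrow> BN (2*r) z = 2 * sigma_sym z ^ r"
proof -
  assume z: "z \<noteq> 0" and r1: "r \<ge> 1"
  have d: "(2*r+1) div 2 = r" by simp
  have "BN (2*r) z = (1/2)^(2*r-1) * inverse (z^r) * (z+1)^(2*r)"
    by (simp add: BN_def d power_int_minus)
  also have "\<dots> = 2 * ((z+1)^2 / (4*z))^r"
  proof (cases r)
    case 0 then show ?thesis using r1 by simp
  next
    case (Suc r')
    have "(1/2::real)^(2*r-1) = 2 * (1/4)^r"
      by (simp add: Suc power_mult power_one_over)
    moreover have "(z+1)^(2*r) = ((z+1)^2)^r" by (simp add: power_mult)
    ultimately show ?thesis using z by (simp add: power_divide power_mult_distrib field_simps)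
  qed
  finally show ?thesis by (simp add: sigma_sym_def add.commute)
qed

lemma BN_odd: "z \<noteq> 0 \<Longrightarrow> BN (2*r+1) z = (z+1)/z * sigma_sym z ^ r"
proof -
  assume z: "z \<noteq> 0"
  have d: "(2*r+1+1) div 2 = Suc r" by simp
  have pw: "z powi (- int ((2*r+1+1) div 2)) = inverse (z^Suc r)"
    by (simp only: d power_int_minus power_int_of_nat)
  have "BN (2*r+1) z = (1/4)^r * inverse (z^Suc r) * (z+1)^(2*r+1)"
    unfolding BN_def pw by (simp add: power_mult power_one_over)
  also have "\<dots> = (z+1)/z * ((z+1)^2 / (4*z))^r"
  proof -
    have "(z+1)^(2*r+1) = (z+1)*((z+1)^2)^r" by (simp add: power_mult)
    then show ?thesis using z by (simp add: power_divide power_mult_distrib field_simps)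
  qed
  finally show ?thesis by (simp add: sigma_sym_def add.commute)
qed



lemma delta_pow: "z > 0 \<Longrightarrow> delta_sym z ^ n = (-1/4)^n * (z-1)^(2*n) * z powr (- real n)"
proof -
  assume z: "z > 0"
  have "delta_sym z ^ n = ((-1/4) * ((z-1)^2 / z))^n"
    by (rule arg_cong[where f="\<lambda>t. t^n"]) (simp add: delta_sym_def power2_commute)
  also have "\<dots> = (-1/4)^n * ((z-1)^2)^n / z^n" by (simp only: power_mult_distrib power_divide times_divide_eq_right)
  also have "\<dots> = (-1/4)^n * (z-1)^(2*n) * z powr (- real n)"
    using z by (simp add: power_mult powr_minus_divide powr_realpow)
  finally show ?thesis .
qed

lemma split_pow: "M \<le> m \<Longrightarrow> (x::real)^m = x^M * x^(m - M)"
  by (metis le_add_diff_inverse power_add)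

lemma exist_even:
  assumes "M \<le> 2*K+2" "r \<ge> 1"
  shows "vanish M (\<lambda>z. Sa K (real r) (delta_sym z) * BN (2*r) z - 2)"
proof -
  define h where "h z = -2 * (-1/4)^Suc K * ((z-1)^(2*Suc K - M) * (z powr (-real (Suc K)) * Ra K r (delta_sym z)))" for z
  have smh: "sm {0<..} h" unfolding h_def
    by (intro sm_hd_cmult(1) sm_mult sm_power sm_shift sm_hd_powr(1) sm_Ra opS) auto
  have "vanish M (\<lambda>z. (z - 1)^M * h z)" by (rule van_shift[OF smh opS]) auto
  then show ?thesis
  proof (rule van_cong[OF opS _ _, rotated 2])
    fix z :: real assume "z \<in> {0<..}"
    then have z: "z > 0" by simp
    have "Sa K (real r) (delta_sym z) * BN (2*r) z = 2 * ((1 - delta_sym z)^r * Sa K (real r) (delta_sym z))"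
      using BN_even[of z r] sigma_delta[of z] z assms(2) by simp
    also have "\<dots> = 2 * (1 - delta_sym z ^ Suc K * Ra K r (delta_sym z))" by (simp only: recm)
    finally have "Sa K (real r) (delta_sym z) * BN (2*r) z - 2 = -2 * delta_sym z ^ Suc K * Ra K r (delta_sym z)"
      by simp
    also have "\<dots> = (z - 1)^M * h z"
    proof -
      have sp: "(z-1)^(2*Suc K) = (z-1)^M * (z-1)^(2*Suc K - M)" by (rule split_pow) (use assms in simp)
      show ?thesis unfolding h_def delta_pow[OF z] sp by (simp only: mult_ac)
    qed
    finally show "(z - 1)^M * h z = Sa K (real r) (delta_sym z) * BN (2*r) z - 2" by simp
  qed simp
qed

lemma exist_odd:
  assumes "M \<le> 2*K+2"
  shows "vanish M (\<lambda>z. z * (Sa K (real r + 1/2) (delta_sym z) * BN (2*r+1) z)^2 - 4)"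
proof -
  define a where "a = real r + 1/2"
  define h where "h z = 4 * (-1/4)^Suc K * ((z-1)^(2*Suc K - M) * (z powr (-real (Suc K)) *
      ((1 - delta_sym z)^(2*r+1) * Ta K a (delta_sym z) - Ra K (2*r+1) (delta_sym z))))" for z
  have sm1: "sm {0<..} (\<lambda>z. 1 - delta_sym z)"
    by (intro sm_hd_diff(1) sm_hd_const(1) sm_delta opS)
  have smh: "sm {0<..} h" unfolding h_def
    by (intro sm_hd_cmult(1) sm_mult sm_power sm_shift sm_hd_powr(1) sm_Ra sm_Ta sm_hd_diff(1) sm1 opS) auto
  have "vanish M (\<lambda>z. (z - 1)^M * h z)" by (rule van_shift[OF smh opS]) auto
  then show ?thesis unfolding a_def[symmetric]
  proof (rule van_cong[OF opS _ _, rotated 2])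
    fix z :: real assume "z \<in> {0<..}"
    then have z: "z > 0" by simp
    define d where "d = delta_sym z"
    have sg: "sigma_sym z = 1 - d" using sigma_delta[of z] z by (simp add: d_def)
    have ta: "2*a = real (2*r+1)" by (simp add: a_def)
    have e1: "z * ((z+1)/z)^2 = 4 * sigma_sym z"
      using z by (simp add: sigma_sym_def power2_eq_square field_simps)
    have e2: "(sigma_sym z ^ r)^2 = sigma_sym z ^ (2*r)" by (simp add: power_mult[symmetric] mult.commute)
    have "z * (Sa K a d * BN (2*r+1) z)^2 = Sa K a d ^ 2 * (z * ((z+1)/z)^2) * (sigma_sym z ^ r)^2"
      unfolding BN_odd[of z r, OF z[THEN less_imp_neq, symmetric]] by (simp only: power_mult_distrib mult_ac)
    also have "\<dots> = Sa K a d ^ 2 * (4 * sigma_sym z ^ (2*r+1))"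
      unfolding e1 e2 by simp
    also have "\<dots> = 4 * ((1 - d)^(2*r+1) * Sa K (real (2*r+1)) d) + 4 * (1-d)^(2*r+1) * (d^Suc K * Ta K a d)"
      unfolding Sq sg ta by (simp only: distrib_left distrib_right mult_ac)
    also have "\<dots> = 4 * (1 - d^Suc K * Ra K (2*r+1) d) + 4 * (1-d)^(2*r+1) * (d^Suc K * Ta K a d)"
      by (simp only: recm)
    finally have "z * (Sa K a d * BN (2*r+1) z)^2 - 4 = 4 * d^Suc K * ((1-d)^(2*r+1) * Ta K a d - Ra K (2*r+1) d)"
      by (simp add: algebra_simps)
    also have "\<dots> = (z - 1)^M * h z"
    proof -
      have sp: "(z-1)^(2*Suc K) = (z-1)^M * (z-1)^(2*Suc K - M)" by (rule split_pow) (use assms in simp)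
      show ?thesis unfolding h_def d_def delta_pow[OF z] sp by (simp only: mult_ac)
    qed
    finally show "(z - 1)^M * h z = z * (Sa K a (delta_sym z) * BN (2*r+1) z)^2 - 4" by (simp add: d_def)
  qed simp
qed



lemma laurent_uniq:
  fixes c :: "int \<Rightarrow> real" and a :: real
  assumes M: "2*K < M" and van: "vanish M (\<lambda>z. laurent c (-int K) (int K) z - Sa K a (delta_sym z))" and z: "z \<noteq> 0"
  shows "laurent c (-int K) (int K) z = Sa K a (delta_sym z)"
proof -
  define qL where "qL = (\<Sum>j\<in>{-int K..int K}. monom (c j) (nat (j + int K)))"
  define qC where "qC = (\<Sum>s\<in>{0..K}. smult (((a + real s - 1) gchoose s) * (-1/4)^s) ([:-1, 1::real:]^(2 * s) * monom 1 (K - s)))"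
  define q where "q = qL - qC"
  have pL: "poly qL w = w^K * laurent c (-int K) (int K) w" if w: "w \<noteq> 0" for w
  proof -
    have "poly qL w = (\<Sum>j\<in>{-int K..int K}. c j * w^(nat (j + int K)))"
      by (simp add: qL_def poly_sum poly_monom)
    also have "\<dots> = (\<Sum>j\<in>{-int K..int K}. w^K * (c j * w powi j))"
    proof (rule sum.cong)
      fix j assume j: "j \<in> {-int K..int K}"
      have "w^(nat (j + int K)) = w powi (j + int K)" using j by (simp add: power_int_nonneg_exp)
      also have "\<dots> = w powi j * w^K" using w by (simp add: power_int_add)
      finally show "c j * w^(nat (j + int K)) = w^K * (c j * w powi j)" by simp
    qed simp
    finally show ?thesis by (simp add: laurent_def sum_distrib_left)
  qed
  have pC: "poly qC w = w^K * Sa K a (delta_sym w)" if w: "w \<noteq> 0" for w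
  proof -
    have "poly qC w = (\<Sum>s\<in>{0..K}. ((a + real s - 1) gchoose s) * (-1/4)^s * ((w - 1)^(2 * s) * w^(K - s)))"
      by (simp add: qC_def poly_sum poly_monom)
    also have "\<dots> = (\<Sum>s\<in>{0..K}. w^K * (((a + real s - 1) gchoose s) * delta_sym w ^ s))"
    proof (rule sum.cong)
      fix s assume s: "s \<in> {0..K}"
      have "delta_sym w ^ s = ((-1/4) * ((w-1)^2 / w))^s"
        by (rule arg_cong[where f="\<lambda>t. t^s"]) (simp add: delta_sym_def power2_commute)
      also have "\<dots> = (-1/4)^s * (w-1)^(2 * s) / w^s" by (simp only: power_mult_distrib power_divide times_divide_eq_right power_mult[symmetric])
      finally have d: "delta_sym w ^ s = (-1/4)^s * (w-1)^(2 * s) / w^s" .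
      have "w^K = w^s * w^(K-s)" using s by (simp add: power_add[symmetric])
      then show "((a + real s - 1) gchoose s) * (-1/4)^s * ((w - 1)^(2 * s) * w^(K - s)) =
          w^K * (((a + real s - 1) gchoose s) * delta_sym w ^ s)"
        unfolding d using w by (simp add: field_simps)
    qed simp
    finally show ?thesis by (simp add: Sa_def sum_distrib_left)
  qed
  have pq: "poly q w = w^K * (laurent c (-int K) (int K) w - Sa K a (delta_sym w))" if "w \<noteq> 0" for w
    using pL[OF that] pC[OF that] by (simp add: q_def algebra_simps)
  have dL: "degree qL \<le> 2*K" unfolding qL_def
    by (rule degree_sum_le) (auto intro!: order.trans[OF degree_monom_le])
  have dC: "degree qC \<le> 2*K" unfolding qC_def
  proof (rule degree_sum_le)
    fix s assume s: "s \<in> {0..K}"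
    have "degree ([:-1, 1::real:]^(2 * s) * monom 1 (K - s)) \<le> 2 * s + (K - s)"
    proof -
      have "degree ([:-1, 1::real:]^(2 * s)) \<le> 2 * s"
        using degree_power_le[of "[:-1, 1::real:]" "2 * s"] by simp
      then show ?thesis using degree_mult_le[of "[:-1, 1::real:]^(2 * s)" "monom 1 (K-s)"] degree_monom_le[of "1::real" "K-s"]
        by linarith
    qed
    then show "degree (smult (((a + real s - 1) gchoose s) * (-1/4)^s) ([:-1, 1::real:]^(2 * s) * monom 1 (K - s))) \<le> 2*K"
      using s degree_smult_le[of _ "[:-1, 1::real:]^(2 * s) * monom 1 (K - s)"] by fastforce
  qed simp
  have dq: "degree q < M" unfolding q_def using degree_diff_le[OF dL dC] M by linarith
  have smK: "sm {0<..} (\<lambda>w. w^K)" by (intro sm_power sm_hd_id(1) opS)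
  have smD: "sm {0<..} (\<lambda>w. laurent c (-int K) (int K) w - Sa K a (delta_sym w))"
    by (intro sm_hd_diff(1) sm_laurent sm_Sa opS)
  have "vanish M (\<lambda>w. w^K * (laurent c (-int K) (int K) w - Sa K a (delta_sym w)))"
    by (rule van_mult[OF smK smD opS _ van]) simp
  then have "vanish M (poly q)"
    by (rule van_cong[OF opS _ _, rotated 2]) (auto simp: pq)
  then have "q = 0"
    by (intro poly_zero_lemma[OF dq]) (auto simp: vanish_def hd_poly(2))
  then have "z^K * (laurent c (-int K) (int K) z - Sa K a (delta_sym z)) = 0"
    using pq[OF z] by simp
  then show ?thesis using z by simp
qed



lemma Sa_at0: "Sa K a 0 = 1"
proof -
  have "Sa K a 0 = (\<Sum>s\<in>{0..K}. if s = 0 then 1 else 0)"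
    unfolding Sa_def by (rule sum.cong) auto
  then show ?thesis by simp
qed

lemma g_sq: "(z::real) > 0 \<Longrightarrow> z * (2 * z powr (-1/2))^2 = 4"
proof -
  assume z: "z > 0"
  have "(z powr (-1/2))^2 = z powr (-1/2) * z powr (-1/2)" by (simp add: power2_eq_square)
  also have "\<dots> = z powr (-1)" by (simp add: powr_add[symmetric])
  also have "\<dots> = 1/z" using z by (simp add: powr_neg_one)
  finally show ?thesis using z by (simp add: power_mult_distrib)
qed

lemma BN_1: "N \<ge> 1 \<Longrightarrow> BN N 1 = 2"
proof -
  assume N: "N \<ge> 1"
  then obtain n where n: "N = Suc n" by (cases N) auto
  have "(1/2::real)^n * 2^n = 1" by (simp add: power_mult_distrib[symmetric])
  then have "(1/2::real)^(N-1) * 2^N = 2" by (simp add: n)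
  then show ?thesis by (simp add: BN_def)
qed



theorem mainTheorem11:
  fixes N M :: nat and c :: "int \<Rightarrow> real"
  defines "k \<equiv> int ((M + 1) div 2)"
  defines "\<rho> \<equiv> N div 2"
  defines "p \<equiv> (if even N then 0 else - 1/2 :: real)"
  assumes "N \<ge> 1" and "M \<ge> 1" and "M \<le> N" and "even (N - M)"
  assumes supp: "\<And>j. j \<notin> {-k+1..k-1} \<Longrightarrow> c j = 0"
  assumes sym: "\<And>z. z \<noteq> 0 \<Longrightarrow> laurent c (-k+1) (k-1) z = laurent c (-k+1) (k-1) (inverse z)"
  assumes cond: "\<And>s. s < M \<Longrightarrow>
      (\<Sum>i=0..s. real (s choose i) * (deriv ^^ i) (laurent c (-k+1) (k-1)) 1
                   * (deriv ^^ (s - i)) (BN N) 1)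
      = 2 * (\<Prod>i<s. p - real i)"
  assumes "z \<noteq> 0"
  shows "BN N z * laurent c (-k+1) (k-1) z =
     (if even N then
        2 * sigma_sym z ^ \<rho> * (\<Sum>s=0..(M - 1) div 2. ((real \<rho> + real s - 1) gchoose s) * delta_sym z ^ s)
      else
        (z + 1) / z * sigma_sym z ^ \<rho> * (\<Sum>s=0..(M - 1) div 2. ((real \<rho> - 1/2 + real s) gchoose s) * delta_sym z ^ s))"
proof -
  define K where "K = (M - 1) div 2"
  have kK1: "-k+1 = - int K" and kK2: "k - 1 = int K"
    using \<open>M \<ge> 1\<close> by (auto simp: k_def K_def)
  define L where "L = laurent c (- int K) (int K)"
  note cond' = cond[unfolded kK1 kK2, folded L_def]
  have M2: "2*K < M" "M \<le> 2*K+2" using \<open>M \<ge> 1\<close> by (auto simp: K_def)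
  have smL: "sm {0<..} L" unfolding L_def by (rule sm_laurent)
  have smB: "sm {0<..} (BN N)" by (rule sm_BN)
  define g where "g z = 2 * z powr p" for z
  have smg: "sm {0<..} g" unfolding g_def by (intro sm_hd_cmult(1) sm_hd_powr(1) opS) auto
  have smLB: "sm {0<..} (\<lambda>z. L z * BN N z)" by (intro sm_mult smL smB opS)
  have V1: "vanish M (\<lambda>z. L z * BN N z - g z)"
    unfolding vanish_def
  proof (intro allI impI)
    fix s assume s: "s < M"
    have "(deriv^^s) (\<lambda>z. L z * BN N z) 1 = 2 * (\<Prod>i<s. p - real i)"
      using leibniz[OF smL smB opS, of 1 s] cond'[OF s] by simp
    moreover have "(deriv^^s) g 1 = 2 * (\<Prod>i<s. p - real i)"
    proof -
      have sp: "sm {0<..} (\<lambda>w. w powr p)" by (rule sm_hd_powr(1)) simp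
      have "(deriv^^s) g 1 = 2 * (deriv^^s) (\<lambda>w. w powr p) 1" unfolding g_def by (rule sm_hd_cmult(2)[OF sp opS]) simp
      also have "\<dots> = 2 * (\<Prod>i<s. p - real i)" using sm_hd_powr(2)[where S="{0<..}" and x=1 and a=p and n=s] by simp
      finally show ?thesis .
    qed
    ultimately show "(deriv^^s) (\<lambda>z. L z * BN N z - g z) 1 = 0"
      using sm_hd_diff(2)[OF smLB smg opS, of 1 s] by simp
  qed
  have L1: "L 1 = 1"
    using cond'[of 0] \<open>M \<ge> 1\<close> BN_1[OF \<open>N \<ge> 1\<close>] by simp
  show ?thesis
  proof (cases "even N")
    case True
    then obtain r where r: "N = 2*r" by blast
    have r1: "r \<ge> 1" and rr: "\<rho> = r" using \<open>N \<ge> 1\<close> r by (auto simp: \<rho>_def)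
    define C0 where "C0 z = Sa K (real r) (delta_sym z)" for z
    have smC: "sm {0<..} C0" unfolding C0_def by (rule sm_Sa)
    have V1': "vanish M (\<lambda>z. L z * BN N z - 2)"
      by (rule van_cong[OF opS _ _ V1]) (auto simp: g_def p_def True)
    have V2: "vanish M (\<lambda>z. C0 z * BN N z - 2)"
      unfolding C0_def r by (rule exist_even[OF M2(2) r1])
    have "vanish M (\<lambda>z. (L z * BN N z - 2) - (C0 z * BN N z - 2))"
      by (rule van_diff[OF _ _ opS _ V1' V2]) (auto intro!: sm_hd_diff(1) sm_mult smL smB smC opS sm_hd_const(1))
    then have "vanish M (\<lambda>z. BN N z * (L z - C0 z))"
      by (rule van_cong[OF opS _ _, rotated 2]) (auto simp: algebra_simps)
    then have "vanish M (\<lambda>z. L z - C0 z)"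
      by (rule van_cancel[OF smB sm_hd_diff(1)[OF smL smC opS] opS, rotated 2]) (auto simp: BN_1[OF \<open>N \<ge> 1\<close>])
    then have LC: "L z = C0 z"
      unfolding L_def C0_def by (rule laurent_uniq[OF M2(1) _ \<open>z \<noteq> 0\<close>])
    show ?thesis unfolding kK1 kK2
      using LC True BN_even[OF \<open>z \<noteq> 0\<close> r1]
      by (simp add: L_def C0_def Sa_def rr K_def r)
  next
    case False
    then obtain r where r: "N = 2*r+1" using oddE by blast
    have rr: "\<rho> = r" using r by (simp add: \<rho>_def)
    define C0 where "C0 z = Sa K (real r + 1/2) (delta_sym z)" for z
    have smC: "sm {0<..} C0" unfolding C0_def by (rule sm_Sa)
    have W1: "vanish M (\<lambda>z. z * (L z * BN N z)^2 - 4)"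
    proof -
      have "vanish M (\<lambda>z. (z * (L z * BN N z + g z)) * (L z * BN N z - g z))"
        by (rule van_mult[OF _ _ opS _ V1]) (auto intro!: sm_hd_diff(1) sm_hd_add(1) sm_mult smLB smg sm_hd_id(1) opS)
      then show ?thesis
      proof (rule van_cong[OF opS _ _, rotated 2])
        fix x :: real assume "x \<in> {0<..}"
        then have "x * (g x)^2 = 4" using g_sq[of x] by (simp add: g_def p_def False)
        then show "x * (L x * BN N x + g x) * (L x * BN N x - g x) = x * (L x * BN N x)^2 - 4"
          by (simp add: algebra_simps power2_eq_square)
      qed simp
    qed
    have W2: "vanish M (\<lambda>z. z * (C0 z * BN N z)^2 - 4)"
      unfolding C0_def r by (rule exist_odd[OF M2(2)])
    have smW: "sm {0<..} (\<lambda>z. z * (X z * BN N z)^2 - 4)" if "sm {0<..} X" for X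
      by (intro sm_hd_diff(1) sm_mult sm_power sm_hd_id(1) sm_hd_const(1) that smB opS)
    have "vanish M (\<lambda>z. (z * (L z * BN N z)^2 - 4) - (z * (C0 z * BN N z)^2 - 4))"
      by (rule van_diff[OF smW[OF smL] smW[OF smC] opS _ W1 W2]) simp
    then have "vanish M (\<lambda>z. (z * BN N z ^ 2 * (L z + C0 z)) * (L z - C0 z))"
      by (rule van_cong[OF opS _ _, rotated 2]) (auto simp: algebra_simps power2_eq_square)
    then have "vanish M (\<lambda>z. L z - C0 z)"
    proof (rule van_cancel[OF _ sm_hd_diff(1)[OF smL smC opS] opS, rotated 3])
      show "sm {0<..} (\<lambda>z. z * BN N z ^ 2 * (L z + C0 z))"
        by (intro sm_mult sm_power sm_hd_add(1) sm_hd_id(1) smB smL smC opS)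
      have "C0 1 = 1" by (simp add: C0_def delta_sym_def Sa_at0)
      then show "1 * BN N 1 ^ 2 * (L 1 + C0 1) \<noteq> 0" using L1 BN_1[OF \<open>N \<ge> 1\<close>] by simp
    qed simp
    then have LC: "L z = C0 z"
      unfolding L_def C0_def by (rule laurent_uniq[OF M2(1) _ \<open>z \<noteq> 0\<close>])
    have sums: "(\<Sum>s=0..K. ((real r - 1/2 + real s) gchoose s) * delta_sym z ^ s) = Sa K (real r + 1/2) (delta_sym z)"
      unfolding Sa_def by (rule sum.cong) (simp_all add: algebra_simps)
    show ?thesis unfolding kK1 kK2
      using LC False BN_odd[OF \<open>z \<noteq> 0\<close>, of r] sums
      by (simp add: L_def C0_def rr K_def r)
  qed
qed


end
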